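(* Let $\Psi\in\mathcal C_d$ satisfy $\lim_{t\to0^+}\Psi(\xi,t)=+\infty$ for each $\xi\in S^{n-1}$, and let $\mu$ be a nonzero finite Borel measure on $S^{n-1}$ not concentrated on any closed hemisphere. If $\{K_i\}_{i\in\mathbb N}\subseteq\mathscr K^n_{(o)}$ is uniformly bounded and $\sup_{i\in\mathbb N}\int_{S^{n-1}}\Psi(\xi,\rho_{K_i}(\xi))\,d\mu(\xi)<+\infty$, then some subsequence of $\{K_i\}$ converges in the Hausdorff metric to some $L\in\mathscr K^n_{(o)}$.
   Context: $S^{n-1}$ unit sphere of $\mathbb R^n$, $n\ge2$. $\mathscr K^n_{(o)}$: compact convex sets with the origin in their interior; $\rho_K(x)=\max\{t\ge0:tx\in K\}$. $\mathcal C_d$: functions $\Psi:S^{n-1}\times(0,\infty)\to\mathbb R$ with $\Psi$, $\Psi_t=\partial\Psi/\partial t$ continuous and $\Psi_t<0$ everywhere. $\mu$ is not concentrated on any closed hemisphere if $\int_{S^{n-1}}(u\cdot\xi)_+\,d\mu(\xi)>0$ for all $u\in S^{n-1}$. *)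

theory Defs
  imports "HOL-Analysis.Analysis"
begin

definition convex_body_o :: "'a::euclidean_space set \<Rightarrow> bool" where
  "convex_body_o K \<longleftrightarrow> compact K \<and> convex K \<and> 0 \<in> interior K"

definition radial :: "'a::euclidean_space set \<Rightarrow> 'a \<Rightarrow> real" where
  "radial K x = (GREATEST t. t \<ge> 0 \<and> t *\<^sub>R x \<in> K)"

definition class_Cd :: "('a::euclidean_space \<Rightarrow> real \<Rightarrow> real) \<Rightarrow> bool" where
  "class_Cd Psi \<longleftrightarrow>
     (\<exists>Psi_t. (\<forall>\<xi>\<in>sphere 0 1. \<forall>t>0. ((\<lambda>s. Psi \<xi> s) has_real_derivative Psi_t \<xi> t) (at t))
        \<and> continuous_on (sphere 0 1 \<times> {0<..}) (\<lambda>(\<xi>, t). Psi \<xi> t)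
        \<and> continuous_on (sphere 0 1 \<times> {0<..}) (\<lambda>(\<xi>, t). Psi_t \<xi> t)
        \<and> (\<forall>\<xi>\<in>sphere 0 1. \<forall>t>0. Psi_t \<xi> t < 0))"

text \<open>A measure on the sphere is not concentrated on any closed hemisphere.\<close>
definition not_concentrated :: "'a::euclidean_space measure \<Rightarrow> bool" where
  "not_concentrated M \<longleftrightarrow>
     (\<forall>u\<in>sphere 0 1. (\<integral>\<xi>. max 0 (u \<bullet> \<xi>) \<partial>M) > 0)"

definition hausdist :: "'a::metric_space set \<Rightarrow> 'a set \<Rightarrow> real" where
  "hausdist A B = max (SUP a\<in>A. infdist a B) (SUP b\<in>B. infdist b A)"

end

theory Submission
  imports Defs "HOL-Complex_Analysis.Great_Picard"
begin
lemma infdist_convex: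
  fixes K :: "'a::euclidean_space set"
  assumes "convex K" "closed K" "K \<noteq> {}" "0 \<le> u" "0 \<le> v" "u + v = 1"
  shows "infdist (u *\<^sub>R x + v *\<^sub>R y) K \<le> u * infdist x K + v * infdist y K"
proof -
  obtain p where p: "p \<in> K" "infdist x K = dist x p"
    using infdist_attains_inf[OF assms(2,3)] by blast
  obtain q where q: "q \<in> K" "infdist y K = dist y q"
    using infdist_attains_inf[OF assms(2,3)] by blast
  have w: "u *\<^sub>R p + v *\<^sub>R q \<in> K"
    using convexD[OF assms(1) p(1) q(1) assms(4,5,6)] .
  have "infdist (u *\<^sub>R x + v *\<^sub>R y) K \<le> dist (u *\<^sub>R x + v *\<^sub>R y) (u *\<^sub>R p + v *\<^sub>R q)"
    by (rule infdist_le[OF w])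
  also have "\<dots> = norm (u *\<^sub>R (x - p) + v *\<^sub>R (y - q))"
    by (simp add: dist_norm algebra_simps)
  also have "\<dots> \<le> norm (u *\<^sub>R (x - p)) + norm (v *\<^sub>R (y - q))"
    by (rule norm_triangle_ineq)
  also have "\<dots> = u * dist x p + v * dist y q"
    using assms(4,5) by (simp add: dist_norm)
  finally show ?thesis using p q by simp
qed

lemma radial_props:
  fixes K :: "'a::euclidean_space set"
  assumes K: "compact K" "0 \<in> interior K" and xi: "norm \<xi> = 1"
  shows "radial K \<xi> *\<^sub>R \<xi> \<in> K" "0 < radial K \<xi>"
    "\<And>R. K \<subseteq> cball 0 R \<Longrightarrow> radial K \<xi> \<le> R"
proof -
  define S where "S = {t::real. t \<ge> 0 \<and> t *\<^sub>R \<xi> \<in> K}"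
  obtain B where B: "\<And>x. x \<in> K \<Longrightarrow> norm x \<le> B"
    using compact_imp_bounded[OF K(1)] bounded_iff by blast
  have "bounded S"
    unfolding bounded_iff
  proof (intro exI ballI)
    fix t assume "t \<in> S"
    then have "t \<ge> 0" "norm (t *\<^sub>R \<xi>) \<le> B" using B unfolding S_def by blast+
    then show "norm t \<le> B" using xi by simp
  qed
  moreover have "closed S"
  proof -
    have "S = {0..} \<inter> (\<lambda>t. t *\<^sub>R \<xi>) -` K" by (auto simp: S_def)
    moreover have "closed ((\<lambda>t. t *\<^sub>R \<xi>) -` K)"
      by (rule continuous_closed_vimage) (use K(1) compact_imp_closed in \<open>auto intro!: continuous_intros\<close>)
    ultimately show ?thesis by auto
  qed
  ultimately have cS: "compact S" by (simp add: compact_eq_bounded_closed)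
  have "0 \<in> S" using K(2) interior_subset by (auto simp: S_def)
  then obtain s where s: "s \<in> S" "\<And>t. t \<in> S \<Longrightarrow> t \<le> s"
    using compact_attains_sup[OF cS] by blast
  have rs: "radial K \<xi> = s"
    unfolding radial_def by (rule Greatest_equality) (use s in \<open>auto simp: S_def\<close>)
  show "radial K \<xi> *\<^sub>R \<xi> \<in> K" using s(1) rs by (simp add: S_def)
  obtain e where e: "e > 0" "ball 0 e \<subseteq> K"
    using K(2) by (meson mem_interior)
  have "(e/2) *\<^sub>R \<xi> \<in> ball 0 e" using e xi by simp
  then have "e/2 \<in> S" using e by (auto simp: S_def)
  then show "0 < radial K \<xi>" using s(2) rs e by fastforce
  show "radial K \<xi> \<le> R" if "K \<subseteq> cball 0 R" for R
  proof -
    have "s *\<^sub>R \<xi> \<in> cball 0 R" using s(1) that by (auto simp: S_def)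
    then show ?thesis using rs s(1) xi by (auto simp: S_def)
  qed
qed

lemma hausdist_le:
  fixes A B :: "'a::metric_space set"
  assumes "A \<noteq> {}" "B \<noteq> {}" "\<And>a. a \<in> A \<Longrightarrow> infdist a B \<le> c" "\<And>b. b \<in> B \<Longrightarrow> infdist b A \<le> c"
  shows "0 \<le> hausdist A B" "hausdist A B \<le> c"
proof -
  have s1: "(SUP a\<in>A. infdist a B) \<le> c" by (rule cSUP_least) (use assms in auto)
  have s2: "(SUP b\<in>B. infdist b A) \<le> c" by (rule cSUP_least) (use assms in auto)
  show "hausdist A B \<le> c" using s1 s2 by (simp add: hausdist_def)
  obtain a where a: "a \<in> A" using assms(1) by blast
  have "bdd_above ((\<lambda>a. infdist a B) ` A)" unfolding bdd_above_def using assms(3) by auto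
  then have "infdist a B \<le> (SUP a\<in>A. infdist a B)" by (rule cSUP_upper[OF a])
  then have "0 \<le> (SUP a\<in>A. infdist a B)" using infdist_nonneg order_trans by blast
  then show "0 \<le> hausdist A B" by (simp add: hausdist_def)
qed

lemma blaschke:
  fixes K :: "nat \<Rightarrow> 'a::euclidean_space set"
  assumes cK: "\<And>i. compact (K i)" and cvK: "\<And>i. convex (K i)"
    and K0: "\<And>i. 0 \<in> K i" and KR: "\<And>i. K i \<subseteq> cball 0 R"
  obtains r L where "strict_mono r" "compact L" "convex L" "0 \<in> L"
    "\<And>e. e > 0 \<Longrightarrow> eventually (\<lambda>j. \<forall>a\<in>K (r j). infdist a L < e) sequentially"
    "((\<lambda>j. hausdist (K (r j)) L) \<longlongrightarrow> 0) sequentially"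
proof -
  define F where "F n x = infdist x (K n)" for n x
  define C where "C = cball (0::'a) R"
  have cC: "compact C" by (simp add: C_def)
  have KC: "K i \<subseteq> C" for i using KR by (simp add: C_def)
  have Fnn: "0 \<le> F n x" for n x by (simp add: F_def infdist_nonneg)
  have bound: "norm (F n x) \<le> R" if "x \<in> C" for n x
  proof -
    have "F n x \<le> dist x 0" unfolding F_def by (rule infdist_le[OF K0])
    then show ?thesis using that Fnn[of n x] by (simp add: C_def)
  qed
  have equi: "\<exists>d. 0 < d \<and> (\<forall>n y. y \<in> C \<and> norm (x - y) < d \<longrightarrow> norm (F n x - F n y) < e)"
    if "x \<in> C" "0 < e" for x e
  proof (intro exI conjI allI impI)
    show "0 < e" by fact
    fix n y assume "y \<in> C \<and> norm (x - y) < e"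
    then show "norm (F n x - F n y) < e"
      using infdist_triangle_abs[of x "K n" y] by (simp add: F_def dist_norm)
  qed
  obtain g k where gc: "continuous_on C g" and k: "strict_mono (k :: nat \<Rightarrow> nat)"
    and unif: "\<And>e. 0 < e \<Longrightarrow> \<exists>N. \<forall>n x. n \<ge> N \<and> x \<in> C \<longrightarrow> norm (F (k n) x - g x) < e"
    using Arzela_Ascoli[OF cC bound equi] by metis
  have lim: "(\<lambda>n. F (k n) x) \<longlonglongrightarrow> g x" if "x \<in> C" for x
  proof (rule LIMSEQ_I)
    fix e :: real assume "0 < e"
    then obtain N where "\<forall>n x. n \<ge> N \<and> x \<in> C \<longrightarrow> norm (F (k n) x - g x) < e" using unif by blast
    then show "\<exists>N. \<forall>n\<ge>N. norm (F (k n) x - g x) < e" using that by blast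
  qed
  have gnn: "0 \<le> g x" if "x \<in> C" for x
    by (rule LIMSEQ_le_const[OF lim[OF that]]) (use Fnn in auto)
  define L where "L = {x \<in> C. g x = 0}"
  have "0 \<in> C" using KC K0 by blast
  have F0: "F n 0 = 0" for n by (simp add: F_def K0)
  have "g 0 = 0"
    using LIMSEQ_unique[OF lim[OF \<open>0 \<in> C\<close>]] F0 by simp
  then have L0: "0 \<in> L" using \<open>0 \<in> C\<close> by (simp add: L_def)
  have "closed L" unfolding L_def
    by (rule continuous_closed_preimage_constant[OF gc]) (simp add: C_def)
  moreover have "L \<subseteq> C" by (auto simp: L_def)
  ultimately have cL: "compact L"
    using cC by (meson bounded_subset compact_eq_bounded_closed)
  have key: "\<exists>y\<in>L. dist x y = g x" if x: "x \<in> C" for x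
  proof -
    have "\<exists>p. p \<in> K (k n) \<and> F (k n) x = dist x p" for n
      using infdist_attains_inf[OF compact_imp_closed[OF cK] ] K0 unfolding F_def by blast
    then obtain p where p: "\<And>n. p n \<in> K (k n)" "\<And>n. F (k n) x = dist x (p n)" by metis
    have "\<forall>n. p n \<in> C" using p(1) KC by blast
    then obtain y s where y: "y \<in> C" "strict_mono (s :: nat \<Rightarrow> nat)" "(p \<circ> s) \<longlonglongrightarrow> y"
      using compact_imp_seq_compact[OF cC] unfolding seq_compact_def by metis
    have l1: "(\<lambda>n. dist x (p (s n))) \<longlonglongrightarrow> dist x y"
      using tendsto_dist[OF tendsto_const y(3)] by (simp add: o_def)
    have l2: "(\<lambda>n. dist x (p (s n))) \<longlonglongrightarrow> g x"
      using LIMSEQ_subseq_LIMSEQ[OF lim[OF x] y(2)] p(2) by (simp add: o_def)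
    have gx: "g x = dist x y" using LIMSEQ_unique[OF l2 l1] .
    have l3: "(\<lambda>n. dist y (p (s n))) \<longlonglongrightarrow> 0"
      using tendsto_dist[OF tendsto_const y(3), of y] by (simp add: o_def)
    have l4: "(\<lambda>n. F (k (s n)) y) \<longlonglongrightarrow> g y"
      using LIMSEQ_subseq_LIMSEQ[OF lim[OF y(1)] y(2)] by (simp add: o_def)
    have "g y \<le> 0"
      by (rule LIMSEQ_le[OF l4 l3]) (use p(1) in \<open>auto simp: F_def intro!: infdist_le\<close>)
    with gnn[OF y(1)] have "y \<in> L" using y(1) by (simp add: L_def)
    then show ?thesis using gx by auto
  qed
  have idL: "infdist x L \<le> g x" if "x \<in> C" for x
    using key[OF that] infdist_le by metis
  have cvL: "convex L"
  proof (rule convexI)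
    fix x y and u v :: real assume xy: "x \<in> L" "y \<in> L" and uv: "0 \<le> u" "0 \<le> v" "u + v = 1"
    have xC: "x \<in> C" and yC: "y \<in> C" using xy by (auto simp: L_def)
    have zC: "u *\<^sub>R x + v *\<^sub>R y \<in> C"
      using convexD[OF convex_cball xC[unfolded C_def] yC[unfolded C_def]] uv by (simp add: C_def)
    have "F (k n) (u *\<^sub>R x + v *\<^sub>R y) \<le> u * F (k n) x + v * F (k n) y" for n
      unfolding F_def
      by (rule infdist_convex[OF cvK compact_imp_closed[OF cK]]) (use uv K0 in blast)+
    moreover have "(\<lambda>n. u * F (k n) x + v * F (k n) y) \<longlonglongrightarrow> u * g x + v * g y"
      by (intro tendsto_intros lim xC yC)
    ultimately have "g (u *\<^sub>R x + v *\<^sub>R y) \<le> u * g x + v * g y"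
      using LIMSEQ_le[OF lim[OF zC]] by blast
    then have "g (u *\<^sub>R x + v *\<^sub>R y) \<le> 0" using xy by (simp add: L_def)
    then show "u *\<^sub>R x + v *\<^sub>R y \<in> L" using gnn[OF zC] zC by (simp add: L_def)
  qed
  have ev: "eventually (\<lambda>j. (\<forall>a\<in>K (k j). infdist a L < e) \<and> (\<forall>b\<in>L. infdist b (K (k j)) < e)) sequentially"
    if e0: "e > 0" for e
  proof -
    obtain N where N: "\<forall>n x. n \<ge> N \<and> x \<in> C \<longrightarrow> norm (F (k n) x - g x) < e" using unif[OF e0] by blast
    show ?thesis unfolding eventually_sequentially
    proof (intro exI allI impI conjI ballI)
      fix n assume n: "N \<le> n"
      fix a assume a: "a \<in> K (k n)"
      then have aC: "a \<in> C" using KC by blast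
      have "F (k n) a = 0" using a by (simp add: F_def)
      moreover have "\<bar>F (k n) a - g a\<bar> < e" using N n aC by auto
      ultimately have "g a < e" by linarith
      then show "infdist a L < e" using idL[OF aC] by linarith
    next
      fix n assume n: "N \<le> n"
      fix b assume b: "b \<in> L"
      then have "b \<in> C" "g b = 0" by (auto simp: L_def)
      moreover have "\<bar>F (k n) b - g b\<bar> < e" using N n \<open>b \<in> C\<close> by auto
      ultimately show "infdist b (K (k n)) < e" using Fnn[of "k n" b] by (simp add: F_def)
    qed
  qed
  have HD: "((\<lambda>j. hausdist (K (k j)) L) \<longlongrightarrow> 0) sequentially"
  proof (rule tendstoI)
    fix e :: real assume e: "e > 0"
    show "eventually (\<lambda>j. dist (hausdist (K (k j)) L) 0 < e) sequentially"
      using ev[OF half_gt_zero[OF e]]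
    proof (rule eventually_mono)
      fix j assume h: "(\<forall>a\<in>K (k j). infdist a L < e/2) \<and> (\<forall>b\<in>L. infdist b (K (k j)) < e/2)"
      have "0 \<le> hausdist (K (k j)) L" "hausdist (K (k j)) L \<le> e/2"
        by (rule hausdist_le[where c="e/2"]; use h K0 L0 in \<open>force intro: less_imp_le\<close>)+
      then show "dist (hausdist (K (k j)) L) 0 < e" using e by simp
    qed
  qed
  show ?thesis
    by (rule that[OF k cL cvL L0 _ HD]) (use ev in \<open>metis (mono_tags, lifting) eventually_mono\<close>)
qed

lemma psi_mono:
  assumes "class_Cd Psi" "\<xi> \<in> sphere 0 1" "0 < s" "s \<le> t"
  shows "Psi \<xi> t \<le> Psi \<xi> s"
proof (cases "s = t")
  case False
  obtain Psi_t where D: "\<forall>\<xi>\<in>sphere 0 1. \<forall>t>0. ((\<lambda>s. Psi \<xi> s) has_real_derivative Psi_t \<xi> t) (at t)"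
    and N: "\<forall>\<xi>\<in>sphere 0 1. \<forall>t>0. Psi_t \<xi> t < 0"
    using assms(1) unfolding class_Cd_def by blast
  have "Psi \<xi> t < Psi \<xi> s"
  proof (rule DERIV_neg_imp_decreasing[of s t "\<lambda>s. Psi \<xi> s"])
    show "s < t" using False assms by simp
    fix x assume "s \<le> x" "x \<le> t"
    then have "x > 0" using assms by simp
    then show "\<exists>y. ((\<lambda>s. Psi \<xi> s) has_real_derivative y) (at x) \<and> y < 0"
      using D N assms(2) by blast
  qed
  then show ?thesis by simp
qed simp

lemma psi_lower:
  assumes "class_Cd Psi" "0 < R"
  shows "\<exists>m. \<forall>\<xi>\<in>sphere (0::'a::euclidean_space) 1. m \<le> Psi \<xi> R"
proof -
  have c: "continuous_on (sphere 0 1 \<times> {0<..}) (\<lambda>(\<xi>::'a, t). Psi \<xi> t)"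
    using assms(1) unfolding class_Cd_def by blast
  have "continuous_on (sphere (0::'a) 1) (\<lambda>\<xi>. (\<lambda>(\<xi>, t). Psi \<xi> t) (\<xi>, R))"
    by (rule continuous_on_compose2[OF c]) (use assms(2) in \<open>auto intro!: continuous_intros\<close>)
  then have "compact ((\<lambda>\<xi>. Psi \<xi> R) ` sphere (0::'a) 1)"
    by (intro compact_continuous_image) auto
  then obtain B where "\<forall>x\<in>(\<lambda>\<xi>. Psi \<xi> R) ` sphere (0::'a) 1. norm x \<le> B"
    using compact_imp_bounded bounded_iff by metis
  then show ?thesis by (intro exI[of _ "-B"]) force
qed

lemma support_dir:
  fixes L :: "'a::euclidean_space set"
  assumes "convex L" "closed L" "0 \<in> L" "0 \<notin> interior L"
  shows "\<exists>u. norm u = 1 \<and> (\<forall>y\<in>L. u \<bullet> y \<le> 0)"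
proof -
  have "\<exists>a. a \<noteq> 0 \<and> (\<forall>y\<in>L. a \<bullet> y \<le> 0)"
  proof (cases "interior L = {}")
    case True
    then obtain a b where "a \<noteq> 0" "L \<subseteq> {x. a \<bullet> x = b}"
      using empty_interior_subset_hyperplane[OF assms(1)] by metis
    moreover have "b = 0" using assms(3) \<open>L \<subseteq> _\<close> by auto
    ultimately show ?thesis by (intro exI[of _ a]) auto
  next
    case False
    then have "rel_interior L = interior L" by (rule rel_interior_nonempty_interior)
    then have "0 \<notin> rel_interior L" using assms(4) by simp
    moreover have "0 \<in> closure L" using assms(3) closure_subset by blast
    ultimately obtain a where "a \<noteq> 0" "\<And>y. y \<in> closure L \<Longrightarrow> a \<bullet> 0 \<le> a \<bullet> y"
      using supporting_hyperplane_relative_frontier[OF assms(1)] by metis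
    then show ?thesis using closure_subset
      by (intro exI[of _ "-a"]) (auto simp: inner_minus_left)
  qed
  then obtain a where a: "a \<noteq> 0" "\<forall>y\<in>L. a \<bullet> y \<le> 0" by blast
  show ?thesis
  proof (intro exI[of _ "a /\<^sub>R norm a"] conjI ballI)
    show "norm (a /\<^sub>R norm a) = 1" using a(1) by simp
    fix y assume "y \<in> L"
    then show "(a /\<^sub>R norm a) \<bullet> y \<le> 0" using a(2)
      by (simp add: mult_nonneg_nonpos)
  qed
qed

theorem lemma5p3:
  fixes Psi :: "'a::euclidean_space \<Rightarrow> real \<Rightarrow> real"
    and M :: "'a measure"
    and K :: "nat \<Rightarrow> 'a set"
  assumes dim: "DIM('a) \<ge> 2"
    and Psi_Cd: "class_Cd Psi"
    and Psi_lim: "\<And>\<xi>. \<xi> \<in> sphere 0 1 \<Longrightarrow> filterlim (\<lambda>t. Psi \<xi> t) at_top (at_right 0)"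
    and M_space: "space M = sphere 0 1"
    and M_sets: "sets M = sets (restrict_space borel (sphere (0::'a) 1))"
    and M_finite: "finite_measure M"
    and M_nonzero: "emeasure M (space M) \<noteq> 0"
    and M_nc: "not_concentrated M"
    and K_body: "\<And>i. convex_body_o (K i)"
    and K_bdd: "\<exists>R. \<forall>i. K i \<subseteq> cball 0 R"
    and K_int: "\<exists>C. \<forall>i. integrable M (\<lambda>\<xi>. Psi \<xi> (radial (K i) \<xi>))
                        \<and> (\<integral>\<xi>. Psi \<xi> (radial (K i) \<xi>) \<partial>M) \<le> C"
  shows "\<exists>r L. strict_mono r \<and> convex_body_o L \<and>
           ((\<lambda>j. hausdist (K (r j)) L) \<longlongrightarrow> 0) sequentially"
proof -
  obtain R0 where R0: "\<forall>i. K i \<subseteq> cball 0 R0" using K_bdd by blast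
  define R where "R = max R0 1"
  have "cball (0::'a) R0 \<subseteq> cball 0 R" by (auto simp: R_def)
  then have KR: "K i \<subseteq> cball 0 R" for i using R0 by blast
  have Rpos: "0 < R" by (simp add: R_def)
  obtain C where C: "\<And>i. integrable M (\<lambda>\<xi>. Psi \<xi> (radial (K i) \<xi>))"
    "\<And>i. (\<integral>\<xi>. Psi \<xi> (radial (K i) \<xi>) \<partial>M) \<le> C" using K_int by blast
  have cK: "compact (K i)" and cvK: "convex (K i)" and int0: "0 \<in> interior (K i)" for i
    using K_body[of i] unfolding convex_body_o_def by auto
  have K0: "0 \<in> K i" for i using int0[of i] interior_subset by blast
  obtain r L where r: "strict_mono r" and cL: "compact L" and cvL: "convex L" and L0: "0 \<in> L"
    and evL: "\<And>e. e > 0 \<Longrightarrow> eventually (\<lambda>j. \<forall>a\<in>K (r j). infdist a L < e) sequentially"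
    and HD: "((\<lambda>j. hausdist (K (r j)) L) \<longlongrightarrow> 0) sequentially"
    by (rule blaschke[of K R, OF cK cvK K0 KR]) blast
  have "0 \<in> interior L"
  proof (rule ccontr)
    assume ni: "0 \<notin> interior L"
    obtain u where u: "norm u = 1" "\<forall>y\<in>L. u \<bullet> y \<le> 0"
      using support_dir[OF cvL compact_imp_closed[OF cL] L0 ni] by blast
    define U where "U = {\<xi> \<in> sphere (0::'a) 1. u \<bullet> \<xi> > 0}"
    define rho where "rho j \<xi> = radial (K (r j)) \<xi>" for j \<xi>
    have rho: "rho j \<xi> *\<^sub>R \<xi> \<in> K (r j) \<and> 0 < rho j \<xi> \<and> rho j \<xi> \<le> R" if "\<xi> \<in> sphere 0 1" for j \<xi>
      using radial_props[OF cK int0, of \<xi> "r j"] KR that by (simp add: rho_def)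
    have rho_lim: "(\<lambda>j. rho j \<xi>) \<longlonglongrightarrow> 0" if xiU: "\<xi> \<in> U" for \<xi>
    proof (rule LIMSEQ_I)
      fix e :: real assume e: "0 < e"
      have xi: "\<xi> \<in> sphere 0 1" "u \<bullet> \<xi> > 0" using xiU by (auto simp: U_def)
      have "0 < e * (u \<bullet> \<xi>)" using e xi by simp
      from evL[OF this] obtain N where N: "\<And>j. j \<ge> N \<Longrightarrow> \<forall>a\<in>K (r j). infdist a L < e * (u \<bullet> \<xi>)"
        unfolding eventually_sequentially by blast
      show "\<exists>N. \<forall>j\<ge>N. norm (rho j \<xi> - 0) < e"
      proof (intro exI allI impI)
        fix j assume j: "N \<le> j"
        define a where "a = rho j \<xi> *\<^sub>R \<xi>"
        have aK: "a \<in> K (r j)" and rp: "0 < rho j \<xi>" using rho[OF xi(1)] by (auto simp: a_def)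
        have ia: "infdist a L < e * (u \<bullet> \<xi>)" using N[OF j] aK by blast
        obtain y where y: "y \<in> L" "infdist a L = dist a y"
          using infdist_attains_inf[OF compact_imp_closed[OF cL]] L0 by blast
        have "u \<bullet> a = u \<bullet> y + u \<bullet> (a - y)" by (simp add: inner_diff_right)
        also have "\<dots> \<le> 0 + norm u * norm (a - y)"
          using u(2) y(1) norm_cauchy_schwarz[of u "a - y"] by (intro add_mono) auto
        also have "\<dots> = infdist a L" using u(1) y(2) by (simp add: dist_norm)
        finally have "rho j \<xi> * (u \<bullet> \<xi>) < e * (u \<bullet> \<xi>)" using ia by (simp add: a_def)
        then have "rho j \<xi> < e" using xi(2) by simp
        then show "norm (rho j \<xi> - 0) < e" using rp by simp
      qed
    qed
    have Plim: "filterlim (\<lambda>j. Psi \<xi> (rho j \<xi>)) at_top sequentially" if xiU: "\<xi> \<in> U" for \<xi>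
    proof -
      have xi: "\<xi> \<in> sphere 0 1" using xiU by (auto simp: U_def)
      have "filterlim (\<lambda>j. rho j \<xi>) (at_right 0) sequentially"
        by (rule tendsto_imp_filterlim_at_right[OF rho_lim[OF xiU]]) (use rho[OF xi] in auto)
      then show ?thesis by (rule filterlim_compose[OF Psi_lim[OF xi]])
    qed
    obtain m where m: "\<forall>\<xi>\<in>sphere (0::'a) 1. m \<le> Psi \<xi> R" using psi_lower[OF Psi_Cd Rpos] by blast
    define h where "h j \<xi> = Psi \<xi> (rho j \<xi>) - m" for j \<xi>
    have hnn: "0 \<le> h j \<xi>" if "\<xi> \<in> sphere 0 1" for j \<xi>
    proof -
      have "Psi \<xi> R \<le> Psi \<xi> (rho j \<xi>)" using psi_mono[OF Psi_Cd that, of "rho j \<xi>" R] rho[OF that, of j] by simp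
      moreover have "m \<le> Psi \<xi> R" using m that by blast
      ultimately show ?thesis by (simp add: h_def)
    qed
    have intg: "integrable M (h j)" for j
      unfolding h_def rho_def
      by (intro Bochner_Integration.integrable_diff C finite_measure.integrable_const[OF M_finite])
    have hint: "(\<integral>\<xi>. h j \<xi> \<partial>M) \<le> C - m * measure M (space M)" for j
    proof -
      have "(\<integral>\<xi>. h j \<xi> \<partial>M) = (\<integral>\<xi>. Psi \<xi> (radial (K (r j)) \<xi>) \<partial>M) - (\<integral>\<xi>. m \<partial>M)"
        unfolding h_def rho_def
        by (rule Bochner_Integration.integral_diff[OF C(1) finite_measure.integrable_const[OF M_finite]])
      then show ?thesis using C(2)[of "r j"] by simp
    qed
    have meas: "(\<lambda>\<xi>. ennreal (h j \<xi>)) \<in> borel_measurable M" for j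
      using borel_measurable_integrable[OF intg[of j]] by measurable
    have nnint: "(\<integral>\<^sup>+\<xi>. ennreal (h j \<xi>) \<partial>M) \<le> ennreal (C - m * measure M (space M))" for j
    proof -
      have "AE \<xi> in M. 0 \<le> h j \<xi>" using hnn M_space by (intro AE_I2) auto
      then have "(\<integral>\<^sup>+\<xi>. ennreal (h j \<xi>) \<partial>M) = ennreal (\<integral>\<xi>. h j \<xi> \<partial>M)"
        by (rule nn_integral_eq_integral[OF intg])
      then show ?thesis using hint[of j] by (simp add: ennreal_leI)
    qed
    have Fatou: "(\<integral>\<^sup>+\<xi>. liminf (\<lambda>j. ennreal (h j \<xi>)) \<partial>M) \<le> liminf (\<lambda>j. \<integral>\<^sup>+\<xi>. ennreal (h j \<xi>) \<partial>M)"
      by (rule nn_integral_liminf[OF meas])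
    have rhs: "liminf (\<lambda>j. \<integral>\<^sup>+\<xi>. ennreal (h j \<xi>) \<partial>M) \<le> ennreal (C - m * measure M (space M))"
      by (rule Liminf_le) (use nnint in auto)
    have Usets: "U \<in> sets M"
    proof -
      have "sphere (0::'a) 1 \<inter> space borel \<in> sets borel" by simp
      moreover have "U \<in> sets borel"
      proof -
        have "U = sphere 0 1 \<inter> {\<xi>. 0 < u \<bullet> \<xi>}" by (auto simp: U_def)
        moreover have "{\<xi>::'a. 0 < u \<bullet> \<xi>} \<in> sets borel" by measurable
        ultimately show ?thesis by simp
      qed
      ultimately have "U \<in> sets (restrict_space borel (sphere (0::'a) 1))"
        by (subst sets_restrict_space_iff) (auto simp: U_def)
      then show ?thesis using M_sets by simp
    qed
    have Upos: "emeasure M U \<noteq> 0"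
    proof
      assume U0: "emeasure M U = 0"
      have AU: "AE \<xi> in M. \<xi> \<notin> U"
        by (rule AE_I'[of U]) (use U0 Usets in auto)
      have "AE \<xi> in M. max 0 (u \<bullet> \<xi>) = 0"
        using AU AE_space[of M] by eventually_elim (auto simp: U_def M_space)
      then have "(\<integral>\<xi>. max 0 (u \<bullet> \<xi>) \<partial>M) = 0"
        by (rule integral_eq_zero_AE)
      moreover have "(\<integral>\<xi>. max 0 (u \<bullet> \<xi>) \<partial>M) > 0"
        using M_nc u(1) unfolding not_concentrated_def by simp
      ultimately show False by simp
    qed
    have pw: "top * indicator U \<xi> \<le> liminf (\<lambda>j. ennreal (h j \<xi>))" for \<xi>
    proof (cases "\<xi> \<in> U")
      case True
      have "(\<lambda>j. h j \<xi>) = (\<lambda>j. - m + Psi \<xi> (rho j \<xi>))" by (auto simp: h_def)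
      moreover have "filterlim (\<lambda>j. - m + Psi \<xi> (rho j \<xi>)) at_top sequentially"
        by (rule filterlim_tendsto_add_at_top[OF tendsto_const Plim[OF True]])
      ultimately have "filterlim (\<lambda>j. h j \<xi>) at_top sequentially" by simp
      then have "((\<lambda>j. ennreal (h j \<xi>)) \<longlongrightarrow> top) sequentially"
        by (simp add: ennreal_tendsto_top_eq_at_top)
      then have "liminf (\<lambda>j. ennreal (h j \<xi>)) = top"
        by (rule lim_imp_Liminf[rotated]) simp
      then show ?thesis by simp
    qed simp
    have "top = (\<integral>\<^sup>+\<xi>. top * indicator U \<xi> \<partial>M)"
      using nn_integral_cmult_indicator[OF Usets, of top] Upos by (simp add: ennreal_top_mult)
    also have "\<dots> \<le> (\<integral>\<^sup>+\<xi>. liminf (\<lambda>j. ennreal (h j \<xi>)) \<partial>M)"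
      by (rule nn_integral_mono) (rule pw)
    also have "\<dots> \<le> ennreal (C - m * measure M (space M))"
      using Fatou rhs by (rule order_trans)
    finally show False by (simp add: top_unique)
  qed
  then have "convex_body_o L" using cL cvL unfolding convex_body_o_def by blast
  then show ?thesis using r HD by blast
qed
end
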